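(* Let $\mathcal{R}$ be a right amenable cell space with finite stabiliser $G_0$, let $(\mathcal{R},Q,N,\delta)$ be a semi-cellular automaton with $Q$ finite and nonempty and $N$ finite, with global transition function $\Delta$, and let $\mathcal{F}=(F_i)_{i\in I}$ be a right Følner net in $\mathcal{R}$. Then for every subset $X\subseteq Q^M$ we have $\mathrm{h}_{\mathcal{F}}(\Delta(X))\leq\mathrm{h}_{\mathcal{F}}(X)$.
   Context: A cell space $\mathcal{R}$ consists of a group $G$ acting transitively on the left on a nonempty set $M$ via $\triangleright$, a point $m_0\in M$ and a family $(g_{m_0,m})_{m\in M}$ in $G$ with $g_{m_0,m}\triangleright m_0=m$. $G_0$ is the stabiliser of $m_0$, $G/G_0$ the set of left cosets, with $G$ acting by $g\cdot hG_0=ghG_0$. The right semi-action $\triangleleft\colon M\times G/G_0\to M$ is $m\triangleleft gG_0=g_{m_0,m}g\triangleright m_0$. $\mathcal{R}$ is right amenable if there is a finitely additive probability measure $\mu$ on the power set of $M$ such that $\mu(\{a\triangleleft\mathfrak{g}:a\in A\})=\mu(A)$ whenever $\mathfrak{g}\in G/G_0$, $A\subseteq M$ and $m\mapsto m\triangleleft\mathfrak{g}$ is injective on $A$. A right Følner net in $\mathcal{R}$ is a net $(F_i)_{i\in I}$ (over a directed set) of nonempty finite subsets of $M$ with $\lim_{i}\frac{|F_i\setminus\{m: m\triangleleft\mathfrak{g}\in F_i\}|}{|F_i|}=0$ for every $\mathfrak{g}\in G/G_0$. A semi-cellular automaton is $(\mathcal{R},Q,N,\delta)$ with $Q$ a set,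 $N\subseteq G/G_0$ with $G_0\cdot N\subseteq N$, $\delta\colon Q^N\to Q$; its global transition function is $\Delta\colon Q^M\to Q^M$, $\Delta(c)(m)=\delta(n\mapsto c(m\triangleleft n))$. For $A\subseteq M$, $\pi_A\colon Q^M\to Q^A$ is restriction. For $X\subseteq Q^M$ and a net $\mathcal{F}=(F_i)_{i\in I}$ of nonempty finite subsets of $M$, the entropy is $\mathrm{h}_{\mathcal{F}}(X)=\limsup_{i\in I}\frac{\log|\pi_{F_i}(X)|}{|F_i|}$. *)

theory Defs
  imports "HOL-Analysis.Analysis" "HOL-Algebra.Group_Action" "HOL-Library.FuncSet"
begin

text \<open>The set M of cells is the whole (nonempty) type 'm. The group G is a HOL-Algebra
group; the left action of G on M is act, a group action in the sense of HOL-Algebra.\<close>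

definition cell_space ::
  "('g, 'z) monoid_scheme \<Rightarrow> ('g \<Rightarrow> 'm \<Rightarrow> 'm) \<Rightarrow> 'm \<Rightarrow> ('m \<Rightarrow> 'g) \<Rightarrow> bool" where
  "cell_space G act m0 gf \<longleftrightarrow>
     group_action G (UNIV :: 'm set) act \<and>
     (\<forall>m m'. \<exists>g\<in>carrier G. act g m = m') \<and>
     (\<forall>m. gf m \<in> carrier G \<and> act (gf m) m0 = m)"

definition stab0 :: "('g, 'z) monoid_scheme \<Rightarrow> ('g \<Rightarrow> 'm \<Rightarrow> 'm) \<Rightarrow> 'm \<Rightarrow> 'g set" where
  "stab0 G act m0 = stabilizer G act m0"

definition cosets0 :: "('g, 'z) monoid_scheme \<Rightarrow> ('g \<Rightarrow> 'm \<Rightarrow> 'm) \<Rightarrow> 'm \<Rightarrow> 'g set set" where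
  "cosets0 G act m0 = {g <#\<^bsub>G\<^esub> stab0 G act m0 | g. g \<in> carrier G}"

text \<open>Right semi-action m \<triangleleft> gG_0 = g_{m0,m} g \<triangleright> m0 (independent of the representative g).\<close>
definition semi_act ::
  "('g, 'z) monoid_scheme \<Rightarrow> ('g \<Rightarrow> 'm \<Rightarrow> 'm) \<Rightarrow> 'm \<Rightarrow> ('m \<Rightarrow> 'g) \<Rightarrow> 'm \<Rightarrow> 'g set \<Rightarrow> 'm" where
  "semi_act G act m0 gf m c =
     act (gf m \<otimes>\<^bsub>G\<^esub> (SOME g. g \<in> carrier G \<and> c = g <#\<^bsub>G\<^esub> stab0 G act m0)) m0"

definition right_amenable ::
  "('g, 'z) monoid_scheme \<Rightarrow> ('g \<Rightarrow> 'm \<Rightarrow> 'm) \<Rightarrow> 'm \<Rightarrow> ('m \<Rightarrow> 'g) \<Rightarrow> bool" where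
  "right_amenable G act m0 gf \<longleftrightarrow>
     (\<exists>\<mu> :: 'm set \<Rightarrow> real.
        (\<forall>A. 0 \<le> \<mu> A) \<and> \<mu> UNIV = 1 \<and>
        (\<forall>A B. A \<inter> B = {} \<longrightarrow> \<mu> (A \<union> B) = \<mu> A + \<mu> B) \<and>
        (\<forall>c\<in>cosets0 G act m0. \<forall>A. inj_on (\<lambda>m. semi_act G act m0 gf m c) A \<longrightarrow>
            \<mu> ((\<lambda>a. semi_act G act m0 gf a c) ` A) = \<mu> A))"

text \<open>Directed sets: the index set is the whole type 'i with a preorder leq in which every
two elements have an upper bound. Convergence along a net is convergence w.r.t. the
filter of tails.\<close>
definition directed_set :: "('i \<Rightarrow> 'i \<Rightarrow> bool) \<Rightarrow> bool" where
  "directed_set leq \<longleftrightarrow> (\<forall>i. leq i i) \<and> (\<forall>i j k. leq i j \<longrightarrow> leq j k \<longrightarrow> leq i k) \<and>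
                        (\<forall>i j. \<exists>k. leq i k \<and> leq j k)"

definition net_filter :: "('i \<Rightarrow> 'i \<Rightarrow> bool) \<Rightarrow> 'i filter" where
  "net_filter leq = (INF i. principal {j. leq i j})"

definition right_folner_net ::
  "('g, 'z) monoid_scheme \<Rightarrow> ('g \<Rightarrow> 'm \<Rightarrow> 'm) \<Rightarrow> 'm \<Rightarrow> ('m \<Rightarrow> 'g) \<Rightarrow>
   ('i \<Rightarrow> 'i \<Rightarrow> bool) \<Rightarrow> ('i \<Rightarrow> 'm set) \<Rightarrow> bool" where
  "right_folner_net G act m0 gf leq F \<longleftrightarrow>
     directed_set leq \<and> (\<forall>i. finite (F i) \<and> F i \<noteq> {}) \<and>
     (\<forall>c\<in>cosets0 G act m0.
        ((\<lambda>i. real (card (F i - {m. semi_act G act m0 gf m c \<in> F i})) / real (card (F i)))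
          \<longlongrightarrow> 0) (net_filter leq))"

text \<open>Semi-cellular automaton (R, Q, N, delta); Q^N is represented by the
extensional functions from N to Q.\<close>
definition semi_cellular_automaton ::
  "('g, 'z) monoid_scheme \<Rightarrow> ('g \<Rightarrow> 'm \<Rightarrow> 'm) \<Rightarrow> 'm \<Rightarrow> ('m \<Rightarrow> 'g) \<Rightarrow>
   'q set \<Rightarrow> 'g set set \<Rightarrow> (('g set \<Rightarrow> 'q) \<Rightarrow> 'q) \<Rightarrow> bool" where
  "semi_cellular_automaton G act m0 gf Q N \<delta> \<longleftrightarrow>
     cell_space G act m0 gf \<and> N \<subseteq> cosets0 G act m0 \<and>
     (\<forall>g\<in>stab0 G act m0. \<forall>n\<in>N. g <#\<^bsub>G\<^esub> n \<in> N) \<and>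
     (\<forall>u\<in>N \<rightarrow>\<^sub>E Q. \<delta> u \<in> Q)"

definition global_transition ::
  "('g, 'z) monoid_scheme \<Rightarrow> ('g \<Rightarrow> 'm \<Rightarrow> 'm) \<Rightarrow> 'm \<Rightarrow> ('m \<Rightarrow> 'g) \<Rightarrow>
   'g set set \<Rightarrow> (('g set \<Rightarrow> 'q) \<Rightarrow> 'q) \<Rightarrow> ('m \<Rightarrow> 'q) \<Rightarrow> ('m \<Rightarrow> 'q)" where
  "global_transition G act m0 gf N \<delta> c = (\<lambda>m. \<delta> (\<lambda>n\<in>N. c (semi_act G act m0 gf m n)))"

definition entropy :: "('i \<Rightarrow> 'i \<Rightarrow> bool) \<Rightarrow> ('i \<Rightarrow> 'm set) \<Rightarrow> ('m \<Rightarrow> 'q) set \<Rightarrow> ereal" where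
  "entropy leq F X = Limsup (net_filter leq)
     (\<lambda>i. ereal (ln (real (card ((\<lambda>c. restrict c (F i)) ` X))) / real (card (F i))))"

end

theory Submission
  imports Defs
begin

lemma count_lemma:
  fixes T :: "('m \<Rightarrow> 'q) \<Rightarrow> ('m \<Rightarrow> 'q)"
  assumes fF: "finite F" and fE: "finite E" and fQ: "finite Q" and XQ: "X \<subseteq> (UNIV \<rightarrow> Q)"
    and agree: "\<And>x y. x \<in> X \<Longrightarrow> y \<in> X \<Longrightarrow> (\<forall>m\<in>F \<union> E. x m = y m) \<Longrightarrow> (\<forall>m\<in>F. T x m = T y m)"
  shows "card ((\<lambda>c. restrict c F) ` T ` X) \<le> card ((\<lambda>c. restrict c F) ` X) * card Q ^ card E"
proof -
  define H where "H = (\<lambda>p. restrict (T (SOME x. x \<in> X \<and> restrict x F = fst p \<and> restrict x E = snd p)) F)"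
  define S where "S = (\<lambda>c. restrict c F) ` X \<times> (E \<rightarrow>\<^sub>E Q)"
  have sub: "(\<lambda>c. restrict c F) ` T ` X \<subseteq> H ` S"
  proof
    fix z assume "z \<in> (\<lambda>c. restrict c F) ` T ` X"
    then obtain x where x: "x \<in> X" "z = restrict (T x) F" by auto
    let ?p = "(restrict x F, restrict x E)"
    have pS: "?p \<in> S" unfolding S_def using x XQ by (auto simp: PiE_def Pi_def)
    define y where "y = (SOME y. y \<in> X \<and> restrict y F = fst ?p \<and> restrict y E = snd ?p)"
    have "y \<in> X \<and> restrict y F = fst ?p \<and> restrict y E = snd ?p"
      unfolding y_def by (rule someI[of _ x]) (use x in auto)
    hence y: "y \<in> X" "restrict y F = restrict x F" "restrict y E = restrict x E" by auto
    have "\<forall>m\<in>F \<union> E. x m = y m"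
    proof
      fix m assume "m \<in> F \<union> E"
      then show "x m = y m" using y(2,3) by (metis Un_iff restrict_apply')
    qed
    hence "\<forall>m\<in>F. T x m = T y m" using agree x(1) y(1) by blast
    hence "z = H ?p" unfolding H_def y_def[symmetric] x(2) by (auto simp: restrict_def)
    thus "z \<in> H ` S" using pS by blast
  qed
  have fX: "finite ((\<lambda>c. restrict c F) ` X)"
  proof (rule finite_subset)
    show "(\<lambda>c. restrict c F) ` X \<subseteq> F \<rightarrow>\<^sub>E Q" using XQ by (auto simp: PiE_def Pi_def)
    show "finite (F \<rightarrow>\<^sub>E Q)" using fF fQ by (simp add: finite_PiE)
  qed
  have fS: "finite S" unfolding S_def using fX fE fQ by (simp add: finite_PiE)
  have "card ((\<lambda>c. restrict c F) ` T ` X) \<le> card (H ` S)"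
    using sub fS by (simp add: card_mono)
  also have "\<dots> \<le> card S" using fS by (rule card_image_le)
  also have "card S = card ((\<lambda>c. restrict c F) ` X) * card Q ^ card E"
    unfolding S_def using fE by (simp add: card_cartesian_product card_PiE)
  finally show ?thesis .
qed

lemma ln_step:
  assumes "finite F" "F \<noteq> {}" "finite E" "finite Q" "Q \<noteq> {}"
    and le: "a \<le> b * card Q ^ card E"
  shows "ln (real a) / real (card F) \<le> ln (real b) / real (card F) + ln (real (card Q)) * real (card E) / real (card F)"
proof -
  have q1: "card Q \<ge> 1" using assms by (simp add: Suc_le_eq card_gt_0_iff)
  show ?thesis
proof (cases "a = 0")
  case True
  have "ln (real b) \<ge> 0" by (cases "b = 0") auto
  thus ?thesis using True assms q1 by (simp add: divide_nonneg_nonneg)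
next
  case False
  hence a1: "a \<ge> 1" "b \<ge> 1" using le by (auto simp: Suc_le_eq intro: Nat.gr0I)
  have "ln (real a) \<le> ln (real b * real (card Q) ^ card E)"
    using a1 le q1 by (subst ln_le_cancel_iff) (auto simp flip: of_nat_power of_nat_mult)
  also have "\<dots> = ln (real b) + real (card E) * ln (real (card Q))"
    using a1 q1 by (simp add: ln_mult ln_realpow)
  finally have "ln (real a) \<le> ln (real b) + ln (real (card Q)) * real (card E)" by (simp add: mult.commute)
  moreover have "card F > 0" using assms by (simp add: card_gt_0_iff)
  ultimately show ?thesis by (simp add: add_divide_distrib[symmetric] divide_right_mono)
qed
qed

theorem theorem3:
  fixes G :: "('g, 'z) monoid_scheme" and act :: "'g \<Rightarrow> 'm \<Rightarrow> 'm" and m0 :: 'm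
    and gf :: "'m \<Rightarrow> 'g" and Q :: "'q set" and N :: "'g set set"
    and \<delta> :: "('g set \<Rightarrow> 'q) \<Rightarrow> 'q" and leq :: "'i \<Rightarrow> 'i \<Rightarrow> bool" and F :: "'i \<Rightarrow> 'm set"
    and X :: "('m \<Rightarrow> 'q) set"
  assumes "cell_space G act m0 gf"
    and "right_amenable G act m0 gf"
    and "finite (stab0 G act m0)"
    and "semi_cellular_automaton G act m0 gf Q N \<delta>"
    and "finite Q" and "Q \<noteq> {}" and "finite N"
    and "right_folner_net G act m0 gf leq F"
    and "X \<subseteq> (UNIV \<rightarrow> Q)"
  shows "entropy leq F (global_transition G act m0 gf N \<delta> ` X) \<le> entropy leq F X"
proof -
  define sa where "sa = semi_act G act m0 gf"
  define T where "T = global_transition G act m0 gf N \<delta>"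
  define E where "E = (\<lambda>i. (\<Union>n\<in>N. (\<lambda>m. sa m n) ` F i) - F i)"
  define f where "f = (\<lambda>n i. real (card (F i - {m. sa m n \<in> F i})) / real (card (F i)))"
  define a where "a = (\<lambda>i. ln (real (card ((\<lambda>c. restrict c (F i)) ` X))) / real (card (F i)))"
  define b where "b = (\<lambda>i. ln (real (card ((\<lambda>c. restrict c (F i)) ` T ` X))) / real (card (F i)))"
  define q where "q = ln (real (card Q))"
  have fin: "\<And>i. finite (F i)" and ne: "\<And>i. F i \<noteq> {}"
    using assms(8) unfolding right_folner_net_def by auto
  have Ncos: "N \<subseteq> cosets0 G act m0" using assms(4) unfolding semi_cellular_automaton_def by auto
  have flim: "\<And>n. n \<in> N \<Longrightarrow> (f n \<longlongrightarrow> 0) (net_filter leq)"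
    using assms(8) Ncos unfolding right_folner_net_def f_def sa_def by auto
  have q0: "q \<ge> 0" unfolding q_def using assms(5,6)
    by (simp add: Suc_le_eq card_gt_0_iff)
  have step: "b i \<le> a i + q * (\<Sum>n\<in>N. f n i)" for i
  proof -
    have fE: "finite (E i)" unfolding E_def using fin assms(7) by auto
    have cnt: "card ((\<lambda>c. restrict c (F i)) ` T ` X) \<le> card ((\<lambda>c. restrict c (F i)) ` X) * card Q ^ card (E i)"
    proof (rule count_lemma[OF fin fE assms(5,9)])
      fix x y :: "'m \<Rightarrow> 'q" assume "\<forall>m\<in>F i \<union> E i. x m = y m"
      moreover have "\<And>m n. m \<in> F i \<Longrightarrow> n \<in> N \<Longrightarrow> sa m n \<in> F i \<union> E i"
        unfolding E_def by auto
      ultimately show "\<forall>m\<in>F i. T x m = T y m"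
        unfolding T_def global_transition_def sa_def[symmetric]
        by (metis (no_types, lifting) restrict_ext)
    qed
    have "b i \<le> a i + q * real (card (E i)) / real (card (F i))"
      unfolding a_def b_def q_def
      by (rule ln_step[OF fin ne fE assms(5,6) cnt])
    also have "real (card (E i)) \<le> (\<Sum>n\<in>N. real (card (F i - {m. sa m n \<in> F i})))"
    proof -
      have "E i = (\<Union>n\<in>N. (\<lambda>m. sa m n) ` F i - F i)" unfolding E_def by auto
      hence "card (E i) \<le> (\<Sum>n\<in>N. card ((\<lambda>m. sa m n) ` F i - F i))"
        using card_UN_le[OF assms(7), of "\<lambda>n. (\<lambda>m. sa m n) ` F i - F i"] by simp
      also have "\<dots> \<le> (\<Sum>n\<in>N. card (F i - {m. sa m n \<in> F i}))"
      proof (rule sum_mono)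
        fix n
        have "(\<lambda>m. sa m n) ` F i - F i \<subseteq> (\<lambda>m. sa m n) ` (F i - {m. sa m n \<in> F i})" by auto
        hence "card ((\<lambda>m. sa m n) ` F i - F i) \<le> card ((\<lambda>m. sa m n) ` (F i - {m. sa m n \<in> F i}))"
          using fin by (intro card_mono) auto
        also have "\<dots> \<le> card (F i - {m. sa m n \<in> F i})" using fin by (intro card_image_le) auto
        finally show "card ((\<lambda>m. sa m n) ` F i - F i) \<le> card (F i - {m. sa m n \<in> F i})" .
      qed
      finally show ?thesis by (simp flip: of_nat_sum)
    qed
    hence "a i + q * real (card (E i)) / real (card (F i)) \<le> a i + q * (\<Sum>n\<in>N. f n i)"
      unfolding f_def using q0 by (simp add: sum_divide_distrib[symmetric] divide_right_mono mult_left_mono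
          flip: times_divide_eq_right)
    finally show ?thesis .
  qed
  have slim: "((\<lambda>i. q * (\<Sum>n\<in>N. f n i)) \<longlongrightarrow> 0) (net_filter leq)"
  proof -
    have "((\<lambda>i. \<Sum>n\<in>N. f n i) \<longlongrightarrow> (\<Sum>n\<in>N. 0)) (net_filter leq)"
      by (rule tendsto_sum) (rule flim)
    hence "((\<lambda>i. q * (\<Sum>n\<in>N. f n i)) \<longlongrightarrow> q * 0) (net_filter leq)"
      by (intro tendsto_mult tendsto_const) simp
    thus ?thesis by simp
  qed
  show ?thesis
  proof (cases "net_filter leq = bot")
    case True thus ?thesis unfolding entropy_def by simp
  next
    case nb: False
    show ?thesis
    proof (rule ereal_le_epsilon2)
      fix e :: real assume e: "0 < e"
      have ev: "eventually (\<lambda>i. q * (\<Sum>n\<in>N. f n i) < e) (net_filter leq)"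
        using order_tendstoD(2)[OF slim e] .
      have "entropy leq F (T ` X) = Limsup (net_filter leq) (\<lambda>i. ereal (b i))"
        unfolding entropy_def b_def ..
      also have "\<dots> \<le> Limsup (net_filter leq) (\<lambda>i. ereal (a i) + ereal e)"
      proof (rule Limsup_mono)
        show "eventually (\<lambda>i. ereal (b i) \<le> ereal (a i) + ereal e) (net_filter leq)"
          using ev by eventually_elim (use step in \<open>smt (verit) plus_ereal.simps(1) ereal_less_eq(3)\<close>)
      qed
      also have "\<dots> = Limsup (net_filter leq) (\<lambda>i. ereal (a i)) + ereal e"
        by (rule Limsup_add_ereal_right[OF nb]) simp
      also have "Limsup (net_filter leq) (\<lambda>i. ereal (a i)) = entropy leq F X"
        unfolding entropy_def a_def ..
      finally show "entropy leq F (global_transition G act m0 gf N \<delta> ` X) \<le> entropy leq F X + ereal e"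
        unfolding T_def .
    qed
  qed
qed

end
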